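(* Let $n_\text{in}\ge1$, $n_\text{out}=2$, $\mathbf{W}\in\mathbb{R}^{2\times n_\text{in}}$, $\mathbf{b}\in\mathbb{R}^{2}$, $\mathbf{c}\in\mathbb{R}^{n_\text{in}}$, $\mathbf{U}=[\mathbf{u}_1\,\ldots\,\mathbf{u}_{n_\text{in}}]\in\mathbb{R}^{n_\text{in}\times n_\text{in}}$, and $r\in[0,1]$. Let $\mathcal{P}(\mathbf{U})=\{\mathbf{c}+\sum_j\lambda_j\mathbf{u}_j:\lambda\in[0,1]^{n_\text{in}}\}$, $\mathcal{P}(\mathbf{U}^L)=\{\mathbf{c}+\lambda_1 r\mathbf{u}_1+\sum_{j\ge2}\lambda_j\mathbf{u}_j:\lambda\in[0,1]^{n_\text{in}}\}$, $\mathcal{P}(\mathbf{U}^R)=\{\mathbf{c}+r\mathbf{u}_1+\lambda_1(1-r)\mathbf{u}_1+\sum_{j\ge2}\lambda_j\mathbf{u}_j:\lambda\in[0,1]^{n_\text{in}}\}$, and let $\mathcal{P}(\mathbf{V}),\mathcal{P}(\mathbf{V}^L),\mathcal{P}(\mathbf{V}^R)$ be their respective images under $\mathbf{x}\mapsto\mathbf{W}\mathbf{x}+\mathbf{b}$. Let $\mathbf{v}_1=\mathbf{W}\mathbf{u}_1$ with coordinates $v_{1,1},v_{1,2}$. Then \[ \mathrm{Vol}(\mathcal{B}(\mathbf{V}))-\mathrm{Vol}\big(\mathcal{B}(\mathbf{V}^L)\cup\mathcal{B}(\mathbf{V}^R)\big)=2r(1-r)\,|v_{1,1}|\,|v_{1,2}|.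 \]
   Context: For a parallelotope $\mathcal{P}\subset\mathbb{R}^{n_\text{out}}$, $\mathcal{B}(\cdot)$ denotes the smallest axis-aligned hyperrectangle containing it (the Cartesian product over coordinates of the interval between the minimal and maximal coordinate of its vertices); $\mathrm{Vol}$ is Lebesgue area/volume. *)

theory Defs
  imports "HOL-Analysis.Analysis"
begin

definition parallelotope :: "real^'m \<Rightarrow> ('n::finite \<Rightarrow> real^'m) \<Rightarrow> (real^'m) set" where
  "parallelotope c u = {c + (\<Sum>j\<in>UNIV. l j *\<^sub>R u j) | l. \<forall>j. 0 \<le> l j \<and> l j \<le> 1}"

definition bbox :: "(real^'m) set \<Rightarrow> (real^'m) set" where
  "bbox P = {y. \<forall>k. (INF x\<in>P. x $ k) \<le> y $ k \<and> y $ k \<le> (SUP x\<in>P. x $ k)}"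

definition affmap :: "real^'n^'m \<Rightarrow> real^'m \<Rightarrow> real^'n \<Rightarrow> real^'m" where
  "affmap W b x = W *v x + b"

end

theory Submission
  imports Defs
begin

lemma inf_par:
  fixes d :: "real^'m" and w :: "'n::finite \<Rightarrow> real^'m"
  shows "(INF x\<in>parallelotope d w. x$k) = d$k + (\<Sum>j\<in>UNIV. min 0 (w j $ k))"
proof -
  let ?l0 = "\<lambda>j. if w j $ k < 0 then 1 else (0::real)"
  have mem: "d + (\<Sum>j\<in>UNIV. ?l0 j *\<^sub>R w j) \<in> parallelotope d w"
    unfolding parallelotope_def by (rule CollectI, rule exI[of _ ?l0]) auto
  have val: "(d + (\<Sum>j\<in>UNIV. ?l0 j *\<^sub>R w j)) $ k = d$k + (\<Sum>j\<in>UNIV. min 0 (w j $ k))"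
    by (auto intro!: sum.cong)
  have lb: "d$k + (\<Sum>j\<in>UNIV. min 0 (w j $ k)) \<le> x $ k" if xin: "x \<in> parallelotope d w" for x
  proof -
    obtain l where x: "x = d + (\<Sum>j\<in>UNIV. l j *\<^sub>R w j)" and l: "\<forall>j. 0 \<le> l j \<and> l j \<le> 1"
      using xin unfolding parallelotope_def by blast
    have "min 0 (w j $ k) \<le> l j * w j $ k" for j
      using l[rule_format, of j]
      by (cases "w j $ k < 0") (auto simp: mult_left_le_one_le mult_nonneg_nonneg intro: mult_left_le_one_le)
    then show ?thesis unfolding x by (simp add: sum_mono)
  qed
  show ?thesis
    by (rule cInf_eq_minimum[of "d$k + (\<Sum>j\<in>UNIV. min 0 (w j $ k))"]) (use mem val lb in \<open>force+\<close>)
qed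

lemma sup_par:
  fixes d :: "real^'m" and w :: "'n::finite \<Rightarrow> real^'m"
  shows "(SUP x\<in>parallelotope d w. x$k) = d$k + (\<Sum>j\<in>UNIV. max 0 (w j $ k))"
proof -
  let ?l0 = "\<lambda>j. if w j $ k > 0 then 1 else (0::real)"
  have mem: "d + (\<Sum>j\<in>UNIV. ?l0 j *\<^sub>R w j) \<in> parallelotope d w"
    unfolding parallelotope_def by (rule CollectI, rule exI[of _ ?l0]) auto
  have val: "(d + (\<Sum>j\<in>UNIV. ?l0 j *\<^sub>R w j)) $ k = d$k + (\<Sum>j\<in>UNIV. max 0 (w j $ k))"
    by (auto intro!: sum.cong)
  have ub: "x $ k \<le> d$k + (\<Sum>j\<in>UNIV. max 0 (w j $ k))" if xin: "x \<in> parallelotope d w" for x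
  proof -
    obtain l where x: "x = d + (\<Sum>j\<in>UNIV. l j *\<^sub>R w j)" and l: "\<forall>j. 0 \<le> l j \<and> l j \<le> 1"
      using xin unfolding parallelotope_def by blast
    have "l j * w j $ k \<le> max 0 (w j $ k)" for j
      using l[rule_format, of j]
      by (cases "w j $ k > 0") (auto simp: mult_left_le_one_le mult_nonneg_nonpos intro: mult_left_le_one_le)
    then show ?thesis unfolding x by (simp add: sum_mono)
  qed
  show ?thesis
    by (rule cSup_eq_maximum[of "d$k + (\<Sum>j\<in>UNIV. max 0 (w j $ k))"]) (use mem val ub in \<open>force+\<close>)
qed

lemma bbox_par:
  fixes d :: "real^'m" and w :: "'n::finite \<Rightarrow> real^'m"
  shows "bbox (parallelotope d w) = cbox (\<chi> k. d$k + (\<Sum>j\<in>UNIV. min 0 (w j $ k)))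
                                        (\<chi> k. d$k + (\<Sum>j\<in>UNIV. max 0 (w j $ k)))"
  unfolding bbox_def inf_par sup_par by (auto simp: mem_box_cart)

lemma img_par:
  fixes W :: "real^'n::finite^'m" and u :: "'n \<Rightarrow> real^'n"
  shows "affmap W b ` parallelotope c u = parallelotope (W *v c + b) (\<lambda>j. W *v u j)"
proof -
  have lin: "W *v (c + (\<Sum>j\<in>UNIV. l j *\<^sub>R u j)) = W *v c + (\<Sum>j\<in>UNIV. l j *\<^sub>R (W *v u j))" for l
    by (simp add: matrix_vector_right_distrib matrix_vector_mult_scaleR linear_sum[OF matrix_vector_mul_linear] o_def)
  show ?thesis
  proof
    show "affmap W b ` parallelotope c u \<subseteq> parallelotope (W *v c + b) (\<lambda>j. W *v u j)"
    proof
      fix y assume "y \<in> affmap W b ` parallelotope c u"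
      then obtain l where y: "y = affmap W b (c + (\<Sum>j\<in>UNIV. l j *\<^sub>R u j))"
        and l: "\<forall>j. 0 \<le> l j \<and> l j \<le> 1" unfolding parallelotope_def by blast
      have "y = W *v c + b + (\<Sum>j\<in>UNIV. l j *\<^sub>R (W *v u j))"
        unfolding affmap_def y lin by (simp add: algebra_simps)
      then show "y \<in> parallelotope (W *v c + b) (\<lambda>j. W *v u j)"
        unfolding parallelotope_def using l by blast
    qed
  next
    show "parallelotope (W *v c + b) (\<lambda>j. W *v u j) \<subseteq> affmap W b ` parallelotope c u"
    proof
      fix y assume "y \<in> parallelotope (W *v c + b) (\<lambda>j. W *v u j)"
      then obtain l where y: "y = W *v c + b + (\<Sum>j\<in>UNIV. l j *\<^sub>R (W *v u j))"
        and l: "\<forall>j. 0 \<le> l j \<and> l j \<le> 1" unfolding parallelotope_def by blast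
      have "c + (\<Sum>j\<in>UNIV. l j *\<^sub>R u j) \<in> parallelotope c u"
        unfolding parallelotope_def using l by blast
      moreover have "y = affmap W b (c + (\<Sum>j\<in>UNIV. l j *\<^sub>R u j))"
        unfolding affmap_def y lin by (simp add: algebra_simps)
      ultimately show "y \<in> affmap W b ` parallelotope c u" by blast
    qed
  qed
qed

lemma meas_box:
  fixes a e :: "real^2"
  assumes "a$1 \<le> e$1" "a$2 \<le> e$2"
  shows "measure lebesgue (cbox a e) = (e$1 - a$1) * (e$2 - a$2)"
proof -
  have "cbox a e \<noteq> {}" proof -
    have "a$i \<le> e$i" for i using exhaust_2[of i] assms by auto
    then have "a \<in> cbox a e" by (auto simp: mem_box_cart)
    then show ?thesis by blast
  qed
  then have "measure lborel (cbox a e) = (e$1 - a$1) * (e$2 - a$2)"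
    by (simp add: content_cbox_cart UNIV_2)
  then show ?thesis by (simp add: measure_completion)
qed

lemma meas_box':
  fixes a e :: "real^2"
  assumes "e$1 - a$1 = p" "e$2 - a$2 = q" "0 \<le> p" "0 \<le> q"
  shows "measure lebesgue (cbox a e) = p * q"
  using meas_box[of a e] assms by simp

lemma coord:
  fixes r v m M d :: real
  assumes "0 \<le> r" "r \<le> 1" "m \<le> M"
  shows "(d + M + max 0 v) - (d + m + min 0 v) = (M - m) + \<bar>v\<bar>"
    and "(d + M + max 0 (r * v)) - (d + m + min 0 (r * v)) = (M - m) + r*\<bar>v\<bar>"
    and "(d + r * v + M + max 0 ((1-r) * v)) - (d + r * v + m + min 0 ((1-r) * v)) = (M - m) + (1-r)*\<bar>v\<bar>"
    and "min (d + M + max 0 (r * v)) (d + r * v + M + max 0 ((1-r) * v))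
         - max (d + m + min 0 (r * v)) (d + r * v + m + min 0 ((1-r) * v)) = M - m"
proof -
  have a: "0 \<le> 1 - r" using assms by simp
  show "(d + M + max 0 v) - (d + m + min 0 v) = (M - m) + \<bar>v\<bar>" by (simp add: abs_if)
  show "(d + M + max 0 (r * v)) - (d + m + min 0 (r * v)) = (M - m) + r*\<bar>v\<bar>"
  proof (cases "v \<ge> 0")
    case True
    then have "0 \<le> r * v" using assms by auto
    then show ?thesis using True by (simp add: max_def min_def algebra_simps)
  next
    case False
    then have "r * v \<le> 0" using assms by (auto simp: mult_nonneg_nonpos)
    then show ?thesis using False by (simp add: max_def min_def algebra_simps)
  qed
  show "(d + r * v + M + max 0 ((1-r) * v)) - (d + r * v + m + min 0 ((1-r) * v)) = (M - m) + (1-r)*\<bar>v\<bar>"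
  proof (cases "v \<ge> 0")
    case True
    then have "0 \<le> (1-r) * v" using a by auto
    then show ?thesis using True by (simp add: max_def min_def algebra_simps)
  next
    case False
    then have "(1-r) * v \<le> 0" using a by (auto simp: mult_nonneg_nonpos)
    then show ?thesis using False by (simp add: max_def min_def algebra_simps)
  qed
  show "min (d + M + max 0 (r * v)) (d + r * v + M + max 0 ((1-r) * v))
         - max (d + m + min 0 (r * v)) (d + r * v + m + min 0 ((1-r) * v)) = M - m"
  proof (cases "v \<ge> 0")
    case True
    then have "0 \<le> r * v" "0 \<le> (1-r) * v" using assms a by auto
    then show ?thesis using assms by (simp add: max_def min_def algebra_simps)
  next
    case False
    then have "r * v \<le> 0" "(1-r) * v \<le> 0" using assms a by (auto simp: mult_nonneg_nonpos)
    then show ?thesis using assms by (simp add: max_def min_def algebra_simps)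
  qed
qed

lemma sum_upd:
  fixes g :: "real^'m \<Rightarrow> real" and h :: "'n::finite \<Rightarrow> real^'m"
  shows "(\<Sum>j\<in>UNIV. g ((h(i:=z)) j)) = g z + (\<Sum>j\<in>UNIV-{i}. g (h j))"
  by (simp add: sum.remove[of UNIV i])

lemma box_int:
  fixes a e a' e' :: "real^'m"
  shows "cbox a e \<inter> cbox a' e' = cbox (\<chi> k. max (a$k) (a'$k)) (\<chi> k. min (e$k) (e'$k))"
  by (auto simp: mem_box_cart)

theorem corollary1:
  fixes W :: "real^'n::finite^2" and b :: "real^2" and c :: "real^'n"
    and U :: "real^'n^'n" and r :: real and i1 :: 'n
  assumes "0 \<le> r" and "r \<le> 1"
  defines "u \<equiv> (\<lambda>j. column j U)"
  defines "PV \<equiv> affmap W b ` parallelotope c u"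
  defines "PVL \<equiv> affmap W b ` parallelotope c (u(i1 := r *\<^sub>R u i1))"
  defines "PVR \<equiv> affmap W b ` parallelotope (c + r *\<^sub>R u i1) (u(i1 := (1 - r) *\<^sub>R u i1))"
  defines "v1 \<equiv> W *v u i1"
  shows "measure lebesgue (bbox PV) - measure lebesgue (bbox PVL \<union> bbox PVR)
         = 2 * r * (1 - r) * \<bar>v1 $ 1\<bar> * \<bar>v1 $ 2\<bar>"
proof -
  define w where "w = (\<lambda>j. W *v u j)"
  define d where "d = W *v c + b"
  define m where "m = (\<lambda>k. \<Sum>j\<in>UNIV-{i1}. min 0 (w j $ k))"
  define M where "M = (\<lambda>k. \<Sum>j\<in>UNIV-{i1}. max 0 (w j $ k))"
  have mM: "m k \<le> M k" for k unfolding m_def M_def by (rule sum_mono) simp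
  have wi: "w i1 = v1" unfolding w_def v1_def by simp
  have fu: "(\<lambda>j. W *v (u(i1 := x)) j) = w(i1 := W *v x)" for x
    unfolding w_def by auto
  have PV: "PV = parallelotope d w" unfolding PV_def img_par d_def w_def ..
  have PVL: "PVL = parallelotope d (w(i1 := r *\<^sub>R v1))"
    unfolding PVL_def img_par fu d_def v1_def by (simp add: matrix_vector_mult_scaleR)
  have PVR: "PVR = parallelotope (d + r *\<^sub>R v1) (w(i1 := (1-r) *\<^sub>R v1))"
    unfolding PVR_def img_par fu d_def v1_def
    by (simp add: matrix_vector_mult_scaleR matrix_vector_right_distrib algebra_simps)
  let ?loV = "\<chi> k. d$k + m k + min 0 (v1$k)"
  let ?hiV = "\<chi> k. d$k + M k + max 0 (v1$k)"
  let ?loL = "\<chi> k. d$k + m k + min 0 (r * v1$k)"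
  let ?hiL = "\<chi> k. d$k + M k + max 0 (r * v1$k)"
  let ?loR = "\<chi> k. d$k + r * v1$k + m k + min 0 ((1-r) * v1$k)"
  let ?hiR = "\<chi> k. d$k + r * v1$k + M k + max 0 ((1-r) * v1$k)"
  have BV: "bbox PV = cbox ?loV ?hiV"
    unfolding PV bbox_par
    using sum.remove[of UNIV i1 "\<lambda>j. min 0 (w j $ _)"] sum.remove[of UNIV i1 "\<lambda>j. max 0 (w j $ _)"]
    by (simp add: m_def M_def wi algebra_simps)
  have BL: "bbox PVL = cbox ?loL ?hiL"
    unfolding PVL bbox_par sum_upd[of "\<lambda>x. min 0 (x $ _)"] sum_upd[of "\<lambda>x. max 0 (x $ _)"]
    by (simp add: m_def M_def algebra_simps)
  have BR: "bbox PVR = cbox ?loR ?hiR"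
    unfolding PVR bbox_par sum_upd[of "\<lambda>x. min 0 (x $ _)"] sum_upd[of "\<lambda>x. max 0 (x $ _)"]
    by (simp add: m_def M_def algebra_simps)
  note C1 = coord[where v="v1$1" and d="d$1" and m="m 1" and M="M 1", OF assms(1,2) mM]
  note C2 = coord[where v="v1$2" and d="d$2" and m="m 2" and M="M 2", OF assms(1,2) mM]
  note C = C1 C2
  have eV: "measure lebesgue (cbox ?loV ?hiV) = (M 1 - m 1 + \<bar>v1$1\<bar>) * (M 2 - m 2 + \<bar>v1$2\<bar>)"
    by (rule meas_box') (simp_all add: C mM add_nonneg_nonneg)
  have eL: "measure lebesgue (cbox ?loL ?hiL) = (M 1 - m 1 + r * \<bar>v1$1\<bar>) * (M 2 - m 2 + r * \<bar>v1$2\<bar>)"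
    using assms(1) by (intro meas_box') (simp_all add: C mM add_nonneg_nonneg)
  have eR: "measure lebesgue (cbox ?loR ?hiR) = (M 1 - m 1 + (1-r) * \<bar>v1$1\<bar>) * (M 2 - m 2 + (1-r) * \<bar>v1$2\<bar>)"
    using assms(2) by (intro meas_box') (simp_all add: C mM add_nonneg_nonneg)
  have eI: "measure lebesgue (cbox ?loL ?hiL \<inter> cbox ?loR ?hiR) = (M 1 - m 1) * (M 2 - m 2)"
    unfolding box_int by (intro meas_box') (simp_all add: C mM)
  have U: "measure lebesgue (cbox ?loL ?hiL \<union> cbox ?loR ?hiR)
     = measure lebesgue (cbox ?loL ?hiL) + measure lebesgue (cbox ?loR ?hiR)
       - measure lebesgue (cbox ?loL ?hiL \<inter> cbox ?loR ?hiR)"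
    by (rule measure_Un3) auto
  show ?thesis
    unfolding BV BL BR U eV eL eR eI
    by (simp add: algebra_simps)
qed

end
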